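(* Let $P$ be a probability distribution on a set $\mathcal{X}$ and let $f,g:\mathcal{X}\to\mathbb{R}^d$ be square-integrable functions with respect to $P$. Then $$\mathbb{E}_{x,x'\sim P\ \text{i.i.d.}}\big[\|f(x)-g(x')\|_2^2\big]\ge\frac12\,\mathbb{E}_{x\sim P}\big[\|f(x)-g(x)\|_2^2\big].$$ *)

theory Defs
  imports "HOL-Probability.Probability"
begin

end

theory Submission
  imports Defs "HOL-Probability.Probability"
begin

lemma prod_int:
  fixes F :: "'a \<times> 'a \<Rightarrow> real"
  assumes "prob_space M" and [measurable]: "F \<in> borel_measurable (M \<Otimes>\<^sub>M M)"
    and "\<And>x. x \<in> space M \<Longrightarrow> integrable M (\<lambda>y. F (x,y))"
    and "integrable M (\<lambda>x. \<integral>y. norm (F (x,y)) \<partial>M)"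
  shows "integrable (M \<Otimes>\<^sub>M M) F \<and> integral\<^sup>L (M \<Otimes>\<^sub>M M) F = (\<integral>x. \<integral>y. F (x,y) \<partial>M \<partial>M)"
proof -
  interpret pair_prob_space M M using assms(1) by (simp add: pair_prob_space.intro pair_sigma_finite_def prob_space_imp_sigma_finite)
  have i: "integrable (M \<Otimes>\<^sub>M M) F"
    by (rule Fubini_integrable) (use assms in auto)
  then show ?thesis using integral_fst'[OF i] by simp
qed

lemma absprod: "\<bar>(u::real) * v\<bar> \<le> u\<^sup>2 + v\<^sup>2"
proof -
  have "0 \<le> (\<bar>u\<bar> - \<bar>v\<bar>)\<^sup>2" by simp
  then have "2*\<bar>u\<bar>*\<bar>v\<bar> \<le> u\<^sup>2 + v\<^sup>2" by (simp add: power2_diff)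
  moreover have "0 \<le> \<bar>u\<bar>*\<bar>v\<bar>" by simp
  ultimately show ?thesis unfolding abs_mult by linarith
qed

lemma one_dim:
  fixes f g :: "'a \<Rightarrow> real"
  assumes P: "prob_space M"
    and [measurable]: "f \<in> borel_measurable M" and [measurable]: "g \<in> borel_measurable M"
    and f2: "integrable M (\<lambda>x. (f x)\<^sup>2)"
    and g2: "integrable M (\<lambda>x. (g x)\<^sup>2)"
  shows "integrable (M \<Otimes>\<^sub>M M) (\<lambda>z. (f (fst z) - g (snd z))\<^sup>2)"
    and "integrable M (\<lambda>x. (f x - g x)\<^sup>2)"
    and "(\<integral>z. (f (fst z) - g (snd z))\<^sup>2 \<partial>(M \<Otimes>\<^sub>M M)) \<ge> (1/2) * (\<integral>x. (f x - g x)\<^sup>2 \<partial>M)"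
proof -
  interpret prob_space M by fact
  have fi: "integrable M f" by (rule square_integrable_imp_integrable[OF _ f2]) measurable
  have gi: "integrable M g" by (rule square_integrable_imp_integrable[OF _ g2]) measurable
  have fgi: "integrable M (\<lambda>x. f x * g x)"
    by (rule Bochner_Integration.integrable_bound[OF Bochner_Integration.integrable_add[OF f2 g2]])
       (auto intro!: AE_I2 absprod)
  define A where "A = (\<integral>x. (f x)\<^sup>2 \<partial>M)"
  define B where "B = (\<integral>x. (g x)\<^sup>2 \<partial>M)"
  define a where "a = (\<integral>x. f x \<partial>M)"
  define b where "b = (\<integral>x. g x \<partial>M)"
  define C where "C = (\<integral>x. f x * g x \<partial>M)"
  have T1: "integrable (M \<Otimes>\<^sub>M M) (\<lambda>z. (f (fst z))\<^sup>2) \<and> (\<integral>z. (f (fst z))\<^sup>2 \<partial>(M \<Otimes>\<^sub>M M)) = A"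
    using prod_int[OF P, of "\<lambda>z. (f (fst z))\<^sup>2"] f2 by (simp add: A_def prob_space)
  have T2: "integrable (M \<Otimes>\<^sub>M M) (\<lambda>z. (g (snd z))\<^sup>2) \<and> (\<integral>z. (g (snd z))\<^sup>2 \<partial>(M \<Otimes>\<^sub>M M)) = B"
    using prod_int[OF P, of "\<lambda>z. (g (snd z))\<^sup>2"] g2 by (simp add: B_def prob_space)
  have gai: "integrable M (\<lambda>x. \<bar>g x\<bar>)" using gi by auto
  have T3: "integrable (M \<Otimes>\<^sub>M M) (\<lambda>z. f (fst z) * g (snd z)) \<and> (\<integral>z. f (fst z) * g (snd z) \<partial>(M \<Otimes>\<^sub>M M)) = a * b"
    using prod_int[OF P, of "\<lambda>z. f (fst z) * g (snd z)"] fi gi gai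
    by (simp add: a_def b_def abs_mult integrable_abs)
  have e: "(\<lambda>z. (f (fst z) - g (snd z))\<^sup>2) = (\<lambda>z. (f (fst z))\<^sup>2 + (g (snd z))\<^sup>2 - 2 * (f (fst z) * g (snd z)))"
    by (auto simp: power2_diff)
  show "integrable (M \<Otimes>\<^sub>M M) (\<lambda>z. (f (fst z) - g (snd z))\<^sup>2)"
    unfolding e using T1 T2 T3 by auto
  have L: "(\<integral>z. (f (fst z) - g (snd z))\<^sup>2 \<partial>(M \<Otimes>\<^sub>M M)) = A + B - 2*(a*b)"
    unfolding e using T1 T2 T3 by (simp add: integral_diff integral_add)
  show "integrable M (\<lambda>x. (f x - g x)\<^sup>2)"
  proof -
    have "(\<lambda>x. (f x - g x)\<^sup>2) = (\<lambda>x. (f x)\<^sup>2 + (g x)\<^sup>2 - 2 * (f x * g x))"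
      by (auto simp: power2_diff)
    then show ?thesis using f2 g2 fgi by simp
  qed
  have R: "(\<integral>x. (f x - g x)\<^sup>2 \<partial>M) = A + B - 2*C"
  proof -
    have "(\<lambda>x. (f x - g x)\<^sup>2) = (\<lambda>x. (f x)\<^sup>2 + (g x)\<^sup>2 - 2 * (f x * g x))"
      by (auto simp: power2_diff)
    then show ?thesis using f2 g2 fgi by (simp add: A_def B_def C_def integral_diff integral_add)
  qed
  have hi: "integrable M (\<lambda>x. f x + g x)" using fi gi by auto
  have es: "(\<lambda>x. (f x + g x)\<^sup>2) = (\<lambda>x. (f x)\<^sup>2 + (g x)\<^sup>2 + 2 * (f x * g x))"
    by (auto simp: power2_sum)
  have h2: "integrable M (\<lambda>x. (f x + g x)\<^sup>2)"
    unfolding es using f2 g2 fgi by simp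
  have "0 \<le> (\<integral>x. (f x + g x)\<^sup>2 \<partial>M) - (\<integral>x. f x + g x \<partial>M)\<^sup>2"
    using variance_positive[of "\<lambda>x. f x + g x"] variance_eq[OF hi h2] by simp
  also have "(\<integral>x. (f x + g x)\<^sup>2 \<partial>M) = A + B + 2*C"
    unfolding es using f2 g2 fgi by (simp add: A_def B_def C_def integral_add)
  also have "(\<integral>x. f x + g x \<partial>M) = a + b" using fi gi by (simp add: a_def b_def)
  finally have V: "0 \<le> A + B + 2*C - (a+b)\<^sup>2" .
  have "4*(a*b) \<le> (a+b)\<^sup>2" using sum_squares_bound[of a b] by (simp add: power2_sum)
  then show "(\<integral>z. (f (fst z) - g (snd z))\<^sup>2 \<partial>(M \<Otimes>\<^sub>M M)) \<ge> (1/2) * (\<integral>x. (f x - g x)\<^sup>2 \<partial>M)"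
  proof -
    have "A + B + 2*C \<ge> 4*(a*b)" using V \<open>4*(a*b) \<le> (a+b)\<^sup>2\<close> by linarith
    then show ?thesis unfolding L R by (simp add: algebra_simps) (simp add: field_simps)
  qed
qed

lemma normsq: "(norm (x :: real ^ 'd))\<^sup>2 = (\<Sum>i\<in>UNIV. (x $ i)\<^sup>2)"
  by (simp add: norm_vec_def L2_set_def sum_nonneg)

lemma vec_meas: "f \<in> borel_measurable M \<Longrightarrow> (\<lambda>x. (f x :: real ^ 'd) $ i) \<in> borel_measurable M"
  using measurable_compose[of f M borel "\<lambda>x. x $ i" borel]
    borel_measurable_continuous_onI[OF linear_continuous_on[OF bounded_linear_vec_nth]]
  by (simp add: o_def)

lemma coord_sq_int:
  fixes f :: "'a \<Rightarrow> real ^ 'd"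
  assumes "f \<in> borel_measurable M" "integrable M (\<lambda>x. (norm (f x))\<^sup>2)"
  shows "integrable M (\<lambda>x. (f x $ i)\<^sup>2)"
proof (rule Bochner_Integration.integrable_bound[OF assms(2)])
  show "(\<lambda>x. (f x $ i)\<^sup>2) \<in> borel_measurable M" using vec_meas[OF assms(1)] by measurable
  show "AE x in M. norm ((f x $ i)\<^sup>2) \<le> norm ((norm (f x))\<^sup>2)"
  proof (intro AE_I2)
    fix x
    have "\<bar>f x $ i\<bar> \<le> norm (f x)" by (rule component_le_norm_cart)
    then have "\<bar>f x $ i\<bar>\<^sup>2 \<le> (norm (f x))\<^sup>2" by (rule power_mono) simp
    then show "norm ((f x $ i)\<^sup>2) \<le> norm ((norm (f x))\<^sup>2)" by simp
  qed
qed

theorem lemma4: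
  fixes M :: "'a measure" and f g :: "'a \<Rightarrow> real ^ 'd"
  assumes "prob_space M"
    and "f \<in> borel_measurable M" and "g \<in> borel_measurable M"
    and "integrable M (\<lambda>x. (norm (f x))\<^sup>2)"
    and "integrable M (\<lambda>x. (norm (g x))\<^sup>2)"
  shows "(\<integral>z. (norm (f (fst z) - g (snd z)))\<^sup>2 \<partial>(M \<Otimes>\<^sub>M M))
           \<ge> (1/2) * (\<integral>x. (norm (f x - g x))\<^sup>2 \<partial>M)"
proof -
  note od = one_dim[OF assms(1) vec_meas[OF assms(2)] vec_meas[OF assms(3)]
      coord_sq_int[OF assms(2,4)] coord_sq_int[OF assms(3,5)]]
  have "(\<integral>z. (norm (f (fst z) - g (snd z)))\<^sup>2 \<partial>(M \<Otimes>\<^sub>M M))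
      = (\<Sum>i\<in>UNIV. \<integral>z. (f (fst z) $ i - g (snd z) $ i)\<^sup>2 \<partial>(M \<Otimes>\<^sub>M M))"
    unfolding normsq using od(1) by (simp add: Bochner_Integration.integral_sum)
  moreover have "(\<integral>x. (norm (f x - g x))\<^sup>2 \<partial>M)
      = (\<Sum>i\<in>UNIV. \<integral>x. (f x $ i - g x $ i)\<^sup>2 \<partial>M)"
    unfolding normsq using od(2) by (simp add: Bochner_Integration.integral_sum)
  moreover have "(\<Sum>i\<in>UNIV. \<integral>z. (f (fst z) $ i - g (snd z) $ i)\<^sup>2 \<partial>(M \<Otimes>\<^sub>M M))
      \<ge> (\<Sum>i\<in>UNIV. (1/2) * (\<integral>x. (f x $ i - g x $ i)\<^sup>2 \<partial>M))"
    by (rule sum_mono) (rule od(3))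
  ultimately show ?thesis by (simp add: sum_distrib_left)
qed
end
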